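(* For all integers $m,n\ge1$ and every $c>\frac{m!\,n!}{m^m n^n}$ one has $\operatorname{D}^\times_{m,n}(c\psi_1)=\mathbb R^{m\times n}$.
   Context: For $Y\in\mathbb R^{m\times n}$ let $Y_1,\dots,Y_m$ be its rows. For $\boldsymbol x\in\mathbb R^n$ put $\Pi_+(\boldsymbol x):=\prod_{i=1}^n\max\{1,|x_i|\}$. For $\psi:[1,\infty)\to(0,\infty)$ and $T>1$ let $\mathcal S^\times_{m,n}(\psi,T)$ be the set of $Y\in\mathbb R^{m\times n}$ for which there exist $\boldsymbol p\in\mathbb Z^m$, $\boldsymbol q\in\mathbb Z^n\setminus\{\boldsymbol 0\}$ with $\prod_{i=1}^m|Y_i\boldsymbol q-p_i|<\psi(T)$ and $\Pi_+(\boldsymbol q)<T$. Put $\operatorname{D}^\times_{m,n}(\psi):=\bigcup_{T_0>1}\bigcap_{T\ge T_0}\mathcal S^\times_{m,n}(\psi,T)$, and $\psi_1(x):=1/x$. *)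

theory Defs
  imports "HOL-Analysis.Analysis"
begin

definition Pi_plus :: "real^'n \<Rightarrow> real" where
  "Pi_plus x = (\<Prod>i\<in>UNIV. max 1 \<bar>x $ i\<bar>)"

text \<open>S^x_{m,n}(psi,T); matrices Y in R^{m x n} are real^'n^'m, row i is Y $ i.\<close>
definition S_mult :: "(real \<Rightarrow> real) \<Rightarrow> real \<Rightarrow> (real^'n^'m) set" where
  "S_mult \<psi> T = {Y. \<exists>(p::int^'m) (q::int^'n). q \<noteq> 0 \<and>
      (\<Prod>i\<in>UNIV. \<bar>(\<Sum>j\<in>UNIV. Y $ i $ j * of_int (q $ j)) - of_int (p $ i)\<bar>) < \<psi> T \<and>
      Pi_plus (\<chi> j. of_int (q $ j)) < T}"

definition D_mult :: "(real \<Rightarrow> real) \<Rightarrow> (real^'n^'m) set" where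
  "D_mult \<psi> = (\<Union>T0\<in>{1<..}. \<Inter>T\<in>{T0..}. S_mult \<psi> T)"

definition psi1 :: "real \<Rightarrow> real" where
  "psi1 x = 1 / x"

end

theory Submission
  imports Defs
begin

lemma amgm_pow:
  fixes x :: "'a \<Rightarrow> real"
  assumes "finite S" "S \<noteq> {}" "\<And>i. i \<in> S \<Longrightarrow> x i \<ge> 0"
  shows "(\<Prod>i\<in>S. x i) \<le> ((\<Sum>i\<in>S. x i) / card S) ^ card S"
proof -
  have k: "card S > 0" using assms by (simp add: card_gt_0_iff)
  have P: "(\<Prod>i\<in>S. x i) \<ge> 0" using assms by (simp add: prod_nonneg)
  have "(\<Prod>i\<in>S. x i) powr (1 / card S) \<le> (\<Sum>i \<in> S. x i / card S)"
    using arith_geom_mean[OF assms] by simp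
  also have "\<dots> = (\<Sum>i\<in>S. x i) / card S" by (simp add: sum_divide_distrib)
  finally have h: "(\<Prod>i\<in>S. x i) powr (1 / card S) \<le> (\<Sum>i\<in>S. x i) / card S" .
  have "(\<Prod>i\<in>S. x i) = ((\<Prod>i\<in>S. x i) powr (1 / card S)) ^ card S"
  proof (cases "(\<Prod>i\<in>S. x i) = 0")
    case True then show ?thesis using k by simp
  next
    case False
    then have "(\<Prod>i\<in>S. x i) > 0" using P by simp
    then show ?thesis using k by (simp add: powr_realpow[symmetric] powr_powr)
  qed
  also have "\<dots> \<le> ((\<Sum>i\<in>S. x i) / card S) ^ card S"
    by (intro power_mono h) simp
  finally show ?thesis .
qed

lemma CP_step:
  fixes x :: "'a \<Rightarrow> real"
  assumes "b \<notin> A" "finite A"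
  shows "(x(b := y) \<in> {x. (\<Sum>i\<in>insert b A. \<bar>x i\<bar>) \<le> t}) \<longleftrightarrow> x \<in> {x. (\<Sum>i\<in>A. \<bar>x i\<bar>) \<le> t - \<bar>y\<bar>}"
proof -
  have "(\<Sum>i\<in>A. \<bar>(x(b:=y)) i\<bar>) = (\<Sum>i\<in>A. \<bar>x i\<bar>)"
    using assms by (intro sum.cong) auto
  then have "(\<Sum>i\<in>insert b A. \<bar>(x(b:=y)) i\<bar>) = \<bar>y\<bar> + (\<Sum>i\<in>A. \<bar>x i\<bar>)"
    using assms by simp
  then show ?thesis by auto
qed

lemma CP_aux:
  fixes t :: real
  assumes "finite (A :: 'a set)" "t \<ge> 0"
  shows "emeasure (Pi\<^sub>M A (\<lambda>_. lborel))
      ({x. (\<Sum>i\<in>A. \<bar>x i\<bar>) \<le> t} \<inter> space (Pi\<^sub>M A (\<lambda>_. lborel))) = ennreal ((2*t) ^ card A / fact (card A))"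
  using assms(1,2)
proof (induction arbitrary: t rule: finite_induct)
  case (empty t)
  thus ?case by (simp add: PiM_empty)
next
  case (insert b A t)
  define n where "n = card A"
  let ?M = "\<lambda>A. (Pi\<^sub>M A (\<lambda>_. lborel))"
  let ?S = "\<lambda>A t. {x. (\<Sum>i\<in>A. \<bar>x i\<bar>) \<le> t}"
  {
    fix A :: "'a set" and t :: real assume "finite A"
    have "?S A t \<inter> space (?M A) = (\<lambda>x. \<Sum>i\<in>A. \<bar>x i\<bar>) -` {..t} \<inter> space (?M A)"
      by auto
    also have "\<dots> \<in> sets (?M A)"
      using \<open>finite A\<close> by measurable
    finally have "?S A t \<inter> space (?M A) \<in> sets (?M A)" .
  } note meas [measurable] = this
  have emp: "{x::'a\<Rightarrow>real. (\<Sum>i\<in>A. \<bar>x i\<bar>) \<le> s} = {}" if "s < 0" for s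
  proof -
    have "\<not> (\<Sum>i\<in>A. \<bar>x i\<bar>) \<le> s" for x :: "'a \<Rightarrow> real"
    proof -
      have "0 \<le> (\<Sum>i\<in>A. \<bar>x i\<bar>)" by (simp add: sum_nonneg)
      then show ?thesis using that by linarith
    qed
    then show ?thesis by auto
  qed
  interpret product_sigma_finite "\<lambda>_. lborel"
    by standard
  have "emeasure (?M (insert b A)) (?S (insert b A) t \<inter> space (?M (insert b A))) =
        nn_integral (?M (insert b A))
          (\<lambda>x. indicator (?S (insert b A) t \<inter> space (?M (insert b A))) x)"
    using insert.hyps by (subst nn_integral_indicator) auto
  also have "\<dots> = (\<integral>\<^sup>+ y. \<integral>\<^sup>+ x. indicator (?S (insert b A) t \<inter> space (?M (insert b A)))
                    (x(b := y)) \<partial>?M A \<partial>lborel)"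
    using insert.prems insert.hyps by (intro product_nn_integral_insert_rev) auto
  also have "\<dots> = (\<integral>\<^sup>+ y. \<integral>\<^sup>+ x. indicator {-t..t} y * indicator (?S A (t - \<bar>y\<bar>) \<inter> space (?M A)) x
                    \<partial>?M A \<partial>lborel)"
  proof (intro nn_integral_cong)
    fix y :: real and x :: "'a \<Rightarrow> real"
    assume x: "x \<in> space (?M A)"
    show "(indicator (?S (insert b A) t \<inter> space (?M (insert b A))) (x(b := y)) :: ennreal) =
          indicator {-t..t} y * indicator (?S A (t - \<bar>y\<bar>) \<inter> space (?M A)) x"
    proof (cases "\<bar>y\<bar> \<le> t")
      case True
      then show ?thesis using x insert.hyps CP_step[of b A x y t]
        by (auto simp: indicator_def space_PiM PiE_def extensional_def)
    next
      case False
      then show ?thesis using x insert.hyps CP_step[of b A x y t] emp[of "t - \<bar>y\<bar>"]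
        by (auto simp: indicator_def space_PiM PiE_def extensional_def)
    qed
  qed
  also have "\<dots> = (\<integral>\<^sup>+ y. indicator {-t..t} y * emeasure (?M A) (?S A (t - \<bar>y\<bar>) \<inter> space (?M A)) \<partial>lborel)"
    using \<open>finite A\<close> by (subst nn_integral_cmult) (auto simp: nn_integral_indicator)
  also have "\<dots> = (\<integral>\<^sup>+ y. ennreal ((2*(t - \<bar>y\<bar>)) ^ n / fact n) * indicator {-t..t} y \<partial>lborel)"
  proof (intro nn_integral_cong)
    fix y :: real
    show "indicator {-t..t} y * emeasure (?M A) (?S A (t - \<bar>y\<bar>) \<inter> space (?M A)) =
      ennreal ((2*(t - \<bar>y\<bar>)) ^ n / fact n) * indicator {-t..t} y"
    proof (cases "\<bar>y\<bar> \<le> t")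
      case True
      then have "t - \<bar>y\<bar> \<ge> 0" by simp
      from insert.IH[OF this] True show ?thesis by (simp add: indicator_def n_def)
    next
      case False
      then have "y \<notin> {-t..t}" by auto
      then show ?thesis by simp
    qed
  qed
  also have "\<dots> = (\<integral>\<^sup>+ y. ennreal ((2*(t + y)) ^ n / fact n) * indicator {-t..0} y
                  + ennreal ((2*(t - y)) ^ n / fact n) * indicator {0..t} y \<partial>lborel)"
    by (intro nn_integral_cong_AE eventually_mono[OF AE_lborel_singleton[of 0]])
       (auto simp: indicator_def)
  also have "\<dots> = (\<integral>\<^sup>+ y. ennreal ((2*(t + y)) ^ n / fact n) * indicator {-t..0} y \<partial>lborel)
                  + (\<integral>\<^sup>+ y. ennreal ((2*(t - y)) ^ n / fact n) * indicator {0..t} y \<partial>lborel)"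
    by (intro nn_integral_add) auto
  also have "(\<integral>\<^sup>+ y. ennreal ((2*(t + y)) ^ n / fact n) * indicator {-t..0} y \<partial>lborel)
      = ennreal ((2*t)^Suc n / (2 * fact (Suc n)))"
  proof -
    have d: "((\<lambda>y. (2*(t+y))^Suc n / (2 * fact (Suc n))) has_real_derivative (2*(t + y)) ^ n / fact n) (at y)" for y
      by (rule derivative_eq_intros refl | simp)+
    have "(\<integral>\<^sup>+ y. ennreal ((2*(t + y)) ^ n / fact n) * indicator {-t..0} y \<partial>lborel)
       = (2*(t+0))^Suc n / (2 * fact (Suc n)) - (2*(t+(-t)))^Suc n / (2 * fact (Suc n))"
      using insert.prems by (intro nn_integral_FTC_Icc d) auto
    then show ?thesis by simp
  qed
  also have "(\<integral>\<^sup>+ y. ennreal ((2*(t - y)) ^ n / fact n) * indicator {0..t} y \<partial>lborel)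
      = ennreal ((2*t)^Suc n / (2 * fact (Suc n)))"
  proof -
    have d: "((\<lambda>y. - ((2*(t-y))^Suc n / (2 * fact (Suc n)))) has_real_derivative (2*(t - y)) ^ n / fact n) (at y)" for y
      by (rule derivative_eq_intros refl | simp)+
    have "(\<integral>\<^sup>+ y. ennreal ((2*(t - y)) ^ n / fact n) * indicator {0..t} y \<partial>lborel)
       = (- ((2*(t-t))^Suc n / (2 * fact (Suc n)))) - (- ((2*(t-0))^Suc n / (2 * fact (Suc n))))"
      using insert.prems by (intro nn_integral_FTC_Icc d) auto
    then show ?thesis by simp
  qed
  also have "ennreal ((2*t)^Suc n / (2 * fact (Suc n))) + ennreal ((2*t)^Suc n / (2 * fact (Suc n)))
     = ennreal ((2*t)^Suc n / fact (Suc n))"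
  proof -
    have h: "z / (2 * f) + z / (2 * f) = z / f" if "f \<noteq> 0" for z f :: real
      using that by (simp add: field_simps)
    show ?thesis
      using insert.prems by (subst ennreal_plus[symmetric]) (auto simp del: fact_Suc simp: h)
  qed
  finally show ?case using insert.hyps by (simp add: n_def)
qed
lemma inner_sum_Basis_coeff:
  fixes f :: "'a::euclidean_space \<Rightarrow> real"
  assumes "c \<in> Basis"
  shows "(\<Sum>b\<in>Basis. f b *\<^sub>R b) \<bullet> c = f c"
proof -
  have "(\<Sum>b\<in>Basis. f b *\<^sub>R b) \<bullet> c = (\<Sum>b\<in>Basis. if b = c then f b else 0)"
    unfolding inner_sum_left using assms by (intro sum.cong) (auto simp: inner_Basis)
  also have "\<dots> = f c" using assms by simp
  finally show ?thesis .
qed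

lemma CP_eucl:
  fixes t :: real
  assumes "t \<ge> 0"
  shows "emeasure lborel {x::'a::euclidean_space. (\<Sum>b\<in>Basis. \<bar>x \<bullet> b\<bar>) \<le> t}
     = ennreal ((2*t) ^ DIM('a) / fact DIM('a))"
proof -
  have "emeasure lborel {x::'a. (\<Sum>b\<in>Basis. \<bar>x \<bullet> b\<bar>) \<le> t} =
        emeasure (distr (Pi\<^sub>M Basis (\<lambda>b. lborel)) borel (\<lambda>f. \<Sum>b\<in>Basis. f b *\<^sub>R b))
           {x::'a. (\<Sum>b\<in>Basis. \<bar>x \<bullet> b\<bar>) \<le> t}"
    by (subst lborel_eq) simp
  also have "\<dots> = emeasure (Pi\<^sub>M Basis (\<lambda>b. lborel))
                    ({y::'a \<Rightarrow> real. (\<Sum>b\<in>Basis. \<bar>y b\<bar>) \<le> t} \<inter>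
                      space (Pi\<^sub>M Basis (\<lambda>b. lborel)))"
  proof (subst emeasure_distr)
    show "{x::'a. (\<Sum>b\<in>Basis. \<bar>x \<bullet> b\<bar>) \<le> t} \<in> sets borel"
      by measurable
    have "(\<lambda>f. \<Sum>b\<in>Basis. f b *\<^sub>R b) -` {x::'a. (\<Sum>b\<in>Basis. \<bar>x \<bullet> b\<bar>) \<le> t} \<inter>
      space (Pi\<^sub>M Basis (\<lambda>b. lborel)) = {y::'a \<Rightarrow> real. (\<Sum>b\<in>Basis. \<bar>y b\<bar>) \<le> t} \<inter>
                      space (Pi\<^sub>M Basis (\<lambda>b. lborel))"
      by (auto simp: inner_sum_Basis_coeff cong: sum.cong)
    then show "emeasure (Pi\<^sub>M Basis (\<lambda>b. lborel))
     ((\<lambda>f. \<Sum>b\<in>Basis. f b *\<^sub>R b) -` {x::'a. (\<Sum>b\<in>Basis. \<bar>x \<bullet> b\<bar>) \<le> t} \<inter>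
      space (Pi\<^sub>M Basis (\<lambda>b. lborel))) = emeasure (Pi\<^sub>M Basis (\<lambda>b. lborel))
                    ({y::'a \<Rightarrow> real. (\<Sum>b\<in>Basis. \<bar>y b\<bar>) \<le> t} \<inter>
                      space (Pi\<^sub>M Basis (\<lambda>b. lborel)))" by simp
  qed auto
  also have "\<dots> = ennreal ((2*t) ^ DIM('a) / fact DIM('a))"
    using CP_aux[of "Basis::'a set" t] assms by simp
  finally show ?thesis .
qed

lemma CP_vec:
  fixes t :: real
  assumes "t \<ge> 0"
  shows "emeasure lborel {x::real^'n. (\<Sum>j\<in>UNIV. \<bar>x $ j\<bar>) \<le> t}
     = ennreal ((2*t) ^ CARD('n) / fact CARD('n))"
proof -
  have "(\<Sum>b\<in>Basis. \<bar>x \<bullet> b\<bar>) = (\<Sum>j\<in>UNIV. \<bar>x $ j\<bar>)" for x :: "real^'n"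
  proof -
    have e: "Basis = (\<lambda>j. axis j (1::real)) ` (UNIV::'n set)"
      by (auto simp: Basis_vec_def)
    have i: "inj (\<lambda>j. axis j (1::real) :: real^'n)"
      by (auto simp: inj_def axis_eq_axis)
    have "(\<Sum>b\<in>Basis. \<bar>x \<bullet> b\<bar>) = (\<Sum>j\<in>UNIV. \<bar>x \<bullet> axis j 1\<bar>)"
      by (simp only: e sum.reindex[OF i] o_def)
    then show ?thesis by (simp add: inner_axis)
  qed
  then show ?thesis using CP_eucl[OF assms, where 'a="real^'n"] by simp
qed

lemma blichfeldt:
  fixes S :: "'a::euclidean_space set"
  assumes S: "S \<in> sets lborel" and big: "emeasure lborel S > 1"
  shows "\<exists>x\<in>S. \<exists>y\<in>S. x \<noteq> y \<and> (\<forall>b\<in>Basis. (x - y) \<bullet> b \<in> \<int>)"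
proof (rule ccontr)
  assume contra: "\<not> ?thesis"
  define L where "L = (\<lambda>f. \<Sum>b\<in>Basis. of_int (f b) *\<^sub>R b) ` ((Basis::'a set) \<rightarrow>\<^sub>E (UNIV::int set))"
  have cL: "countable L" unfolding L_def
    by (intro countable_image countable_PiE) auto
  have Lint: "k \<bullet> b \<in> \<int>" if "k \<in> L" "b \<in> Basis" for k b
    using that by (auto simp: L_def inner_sum_Basis_coeff)
  define U where "U = {z::'a. \<forall>b\<in>Basis. 0 \<le> z \<bullet> b \<and> z \<bullet> b < 1}"
  have U_meas[measurable]: "U \<in> sets lborel" unfolding U_def by measurable
  have "U \<subseteq> cbox 0 One" by (auto simp: U_def mem_box less_imp_le)
  then have "emeasure lborel U \<le> emeasure lborel (cbox (0::'a) One)"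
    by (intro emeasure_mono) auto
  also have "\<dots> = 1" by (simp add: emeasure_lborel_cbox_eq inner_Basis)
  finally have U1: "emeasure lborel U \<le> 1" .
  define X where "X k = {x\<in>S. x - k \<in> U}" for k
  define T where "T k = {z\<in>U. z + k \<in> S}" for k
  have X_meas[measurable]: "X k \<in> sets lborel" for k
  proof -
    have "X k = S \<inter> ((\<lambda>x. x - k) -` U \<inter> space lborel)"
      by (auto simp: X_def)
    also have "\<dots> \<in> sets lborel"
      by (intro sets.Int S measurable_sets[OF _ U_meas]) auto
    finally show ?thesis .
  qed
  have T_meas[measurable]: "T k \<in> sets lborel" for k
  proof -
    have "T k = U \<inter> ((+) k -` S \<inter> space lborel)"
      by (auto simp: T_def add.commute)
    also have "\<dots> \<in> sets lborel" using S by measurable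
    finally show ?thesis .
  qed
  have XT: "emeasure lborel (X k) = emeasure lborel (T k)" for k
  proof -
    have "emeasure lborel (X k) = emeasure (distr lborel borel ((+) k)) (X k)"
      by (simp add: lborel_distr_plus)
    also have "\<dots> = emeasure lborel ((+) k -` X k \<inter> space lborel)"
      using X_meas[of k] by (subst emeasure_distr) auto
    also have "(+) k -` X k \<inter> space lborel = T k"
      by (auto simp: X_def T_def add.commute)
    finally show ?thesis .
  qed
  have cover: "S = (\<Union>k\<in>L. X k)"
  proof
    show "S \<subseteq> (\<Union>k\<in>L. X k)"
    proof
      fix x assume x: "x \<in> S"
      define k where "k = (\<Sum>b\<in>Basis. of_int (restrict (\<lambda>b. \<lfloor>x \<bullet> b\<rfloor>) Basis b) *\<^sub>R b)"
      have "k \<in> L" unfolding L_def k_def by (intro imageI) auto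
      moreover have "x - k \<in> U"
      proof -
        have h: "(x - k) \<bullet> b = x \<bullet> b - of_int \<lfloor>x \<bullet> b\<rfloor>" if "b \<in> Basis" for b
          using that by (simp add: k_def inner_diff_left inner_sum_Basis_coeff)
        show ?thesis unfolding U_def
        proof (intro CollectI ballI conjI)
          fix b :: 'a assume b: "b \<in> Basis"
          have "(x - k) \<bullet> b = frac (x \<bullet> b)" using h[OF b] by (simp add: frac_def)
          then show "0 \<le> (x - k) \<bullet> b" "(x - k) \<bullet> b < 1" by (simp_all add: frac_lt_1)
        qed
      qed
      ultimately show "x \<in> (\<Union>k\<in>L. X k)" using x by (auto simp: X_def)
    qed
  qed (auto simp: X_def)
  have disjX: "disjoint_family_on X L"
  unfolding disjoint_family_on_def proof (intro ballI impI)
    fix k l assume kl: "k \<in> L" "l \<in> L" "k \<noteq> l"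
    show "X k \<inter> X l = {}"
    proof (rule ccontr)
      assume "X k \<inter> X l \<noteq> {}"
      then obtain x where x: "x - k \<in> U" "x - l \<in> U" by (auto simp: X_def)
      have "k \<bullet> b = l \<bullet> b" if b: "b \<in> Basis" for b
      proof -
        obtain i where i: "k \<bullet> b = of_int i" using Lint[OF kl(1) b] by (auto elim: Ints_cases)
        obtain j where j: "l \<bullet> b = of_int j" using Lint[OF kl(2) b] by (auto elim: Ints_cases)
        have u1: "0 \<le> (x - k) \<bullet> b \<and> (x - k) \<bullet> b < 1" using x(1) b unfolding U_def by blast
        have u2: "0 \<le> (x - l) \<bullet> b \<and> (x - l) \<bullet> b < 1" using x(2) b unfolding U_def by blast
        have "\<lfloor>x \<bullet> b\<rfloor> = i"
          using u1 unfolding inner_diff_left i by (intro floor_unique) auto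
        moreover have "\<lfloor>x \<bullet> b\<rfloor> = j"
          using u2 unfolding inner_diff_left j by (intro floor_unique) auto
        ultimately have "i = j" by simp
        then show ?thesis using i j by simp
      qed
      then have "k = l" by (rule euclidean_eqI)
      with kl show False by simp
    qed
  qed
  have disjT: "disjoint_family_on T L"
  unfolding disjoint_family_on_def proof (intro ballI impI)
    fix k l assume kl: "k \<in> L" "l \<in> L" "k \<noteq> l"
    show "T k \<inter> T l = {}"
    proof (rule ccontr)
      assume "T k \<inter> T l \<noteq> {}"
      then obtain z where z: "z + k \<in> S" "z + l \<in> S" by (auto simp: T_def)
      have "(z + k) - (z + l) = k - l" by simp
      then have "\<forall>b\<in>Basis. ((z + k) - (z + l)) \<bullet> b \<in> \<int>"
        using Lint kl by (auto simp: inner_diff_left)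
      moreover have "z + k \<noteq> z + l" using kl by simp
      ultimately show False using contra z by blast
    qed
  qed
  have "emeasure lborel S = (\<integral>\<^sup>+k. emeasure lborel (X k) \<partial>count_space L)"
    using cover emeasure_UN_countable[OF X_meas cL disjX] by simp
  also have "\<dots> = (\<integral>\<^sup>+k. emeasure lborel (T k) \<partial>count_space L)"
    by (simp add: XT)
  also have "\<dots> = emeasure lborel (\<Union>k\<in>L. T k)"
    using emeasure_UN_countable[OF T_meas cL disjT] by simp
  also have "\<dots> \<le> emeasure lborel U"
    using U_meas by (intro emeasure_mono) (auto simp: T_def)
  finally have "emeasure lborel S \<le> 1" using U1 by simp
  with big show False by simp
qed

lemma mink_app:
  fixes Y :: "real^'n::finite^'m::finite" and R1 R2 :: real
  assumes R1: "R1 \<ge> 0" and R2: "R2 \<ge> 0"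
    and vol: "(2*R1)^CARD('n)/fact CARD('n) * ((2*R2)^CARD('m)/fact CARD('m)) > 1"
  shows "\<exists>(q::real^'n) (p::real^'m). (q, p) \<noteq> 0 \<and> (\<forall>j. q$j \<in> \<int>) \<and> (\<forall>i. p$i \<in> \<int>) \<and>
     (\<Sum>j\<in>UNIV. \<bar>q$j\<bar>) \<le> 2*R1 \<and> (\<Sum>i\<in>UNIV. \<bar>(\<Sum>j\<in>UNIV. Y$i$j * q$j) - p$i\<bar>) \<le> 2*R2"
proof -
  define f where "f = (\<lambda>x::(real^'n) \<times> (real^'m). \<Sum>j\<in>UNIV. \<bar>fst x $ j\<bar>)"
  define g where "g = (\<lambda>x::(real^'n) \<times> (real^'m). \<Sum>i\<in>UNIV. \<bar>snd x $ i - (\<Sum>j\<in>UNIV. Y$i$j * fst x $ j)\<bar>)"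
  define S where "S = {x. f x \<le> R1} \<inter> {x. g x \<le> R2}"
  have cf: "continuous_on UNIV f" unfolding f_def by (intro continuous_intros)
  have cg: "continuous_on UNIV g" unfolding g_def by (intro continuous_intros)
  have "closed S" unfolding S_def
    by (intro closed_Int closed_Collect_le cf cg continuous_on_const)
  then have Sb: "S \<in> sets borel" by (rule borel_closed)
  define A where "A = {u::real^'n. (\<Sum>j\<in>UNIV. \<bar>u $ j\<bar>) \<le> R1}"
  define C where "C = {v::real^'m. (\<Sum>i\<in>UNIV. \<bar>v $ i\<bar>) \<le> R2}"
  have Ab: "A \<in> sets borel"
  proof -
    have "closed A" unfolding A_def by (intro closed_Collect_le continuous_intros)
    then show ?thesis by (rule borel_closed)
  qed
  have Cb: "C \<in> sets borel"
  proof -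
    have "closed C" unfolding C_def by (intro closed_Collect_le continuous_intros)
    then show ?thesis by (rule borel_closed)
  qed
  define c2 where "c2 = emeasure lborel C"
  have fib: "emeasure lborel (Pair u -` S) = c2 * indicator A u" for u
  proof (cases "u \<in> A")
    case True
    define w where "w = (\<chi> i. \<Sum>j\<in>UNIV. Y$i$j * u $ j)"
    have "Pair u -` S = (+) (-w) -` C \<inter> space lborel"
      using True by (auto simp: S_def f_def g_def A_def C_def w_def)
    then have "emeasure lborel (Pair u -` S) = emeasure (distr lborel borel ((+) (-w))) C"
      using Cb by (subst emeasure_distr) auto
    also have "\<dots> = c2" by (simp add: lborel_distr_plus c2_def)
    finally show ?thesis using True by simp
  next
    case False
    then have "Pair u -` S = {}" by (auto simp: S_def f_def A_def)
    then show ?thesis using False by simp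
  qed
  have "emeasure lborel S = emeasure (lborel \<Otimes>\<^sub>M lborel) S"
    by (simp add: lborel_prod)
  also have "\<dots> = (\<integral>\<^sup>+u. emeasure lborel (Pair u -` S) \<partial>lborel)"
  proof (rule lborel.emeasure_pair_measure_alt)
    show "S \<in> sets (lborel \<Otimes>\<^sub>M lborel)" unfolding lborel_prod using Sb by simp
  qed
  also have "\<dots> = (\<integral>\<^sup>+u. c2 * indicator A u \<partial>lborel)"
    by (simp add: fib)
  also have "\<dots> = c2 * emeasure lborel A"
    using Ab by (simp add: nn_integral_cmult_indicator)
  also have "\<dots> = ennreal ((2*R2)^CARD('m)/fact CARD('m)) * ennreal ((2*R1)^CARD('n)/fact CARD('n))"
    unfolding c2_def A_def C_def using CP_vec[OF R1, where 'n='n] CP_vec[OF R2, where 'n='m] by simp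
  also have "\<dots> = ennreal ((2*R1)^CARD('n)/fact CARD('n) * ((2*R2)^CARD('m)/fact CARD('m)))"
    using R1 R2 by (simp add: ennreal_mult'[symmetric] mult.commute)
  finally have "emeasure lborel S > 1" using vol by simp
  then obtain x y where xy: "x \<in> S" "y \<in> S" "x \<noteq> y" "\<forall>b\<in>Basis. (x - y) \<bullet> b \<in> \<int>"
    using blichfeldt[of S] Sb by auto
  obtain q p where qp: "x - y = (q, p)" by (cases "x - y") auto
  have nz: "(q, p) \<noteq> 0" using xy(3) qp by (metis eq_iff_diff_eq_0)
  have qi: "\<forall>j. q$j \<in> \<int>"
  proof
    fix j :: 'n
    have "(axis j 1, 0::real^'m) \<in> (Basis :: ((real^'n) \<times> (real^'m)) set)"
      by (simp add: Basis_prod_def)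
    then have "(x - y) \<bullet> (axis j 1, 0::real^'m) \<in> \<int>" using xy(4) by blast
    then show "q$j \<in> \<int>" using qp by (simp add: inner_axis)
  qed
  have pi: "\<forall>i. p$i \<in> \<int>"
  proof
    fix i :: 'm
    have "(0::real^'n, axis i 1) \<in> (Basis :: ((real^'n) \<times> (real^'m)) set)"
      by (simp add: Basis_prod_def)
    then have "(x - y) \<bullet> (0::real^'n, axis i 1) \<in> \<int>" using xy(4) by blast
    then show "p$i \<in> \<int>" using qp by (simp add: inner_axis)
  qed
  have q_eq: "q = fst x - fst y" and p_eq: "p = snd x - snd y" using qp by (metis fst_diff fst_conv, metis snd_diff snd_conv)
  have "(\<Sum>j\<in>UNIV. \<bar>q$j\<bar>) \<le> (\<Sum>j\<in>UNIV. \<bar>fst x $ j\<bar> + \<bar>fst y $ j\<bar>)"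
    unfolding q_eq by (intro sum_mono) (simp add: abs_triangle_ineq4)
  also have "\<dots> = f x + f y" by (simp add: f_def sum.distrib)
  also have "\<dots> \<le> 2 * R1" using xy(1,2) by (simp add: S_def)
  finally have b1: "(\<Sum>j\<in>UNIV. \<bar>q$j\<bar>) \<le> 2 * R1" .
  have lin: "(\<Sum>j\<in>UNIV. Y$i$j * q$j) - p$i = (snd y $ i - (\<Sum>j\<in>UNIV. Y$i$j * fst y $ j)) - (snd x $ i - (\<Sum>j\<in>UNIV. Y$i$j * fst x $ j))" for i
    unfolding q_eq p_eq by (simp add: right_diff_distrib sum_subtractf)
  have "(\<Sum>i\<in>UNIV. \<bar>(\<Sum>j\<in>UNIV. Y$i$j * q$j) - p$i\<bar>) \<le>
      (\<Sum>i\<in>UNIV. \<bar>snd y $ i - (\<Sum>j\<in>UNIV. Y$i$j * fst y $ j)\<bar> + \<bar>snd x $ i - (\<Sum>j\<in>UNIV. Y$i$j * fst x $ j)\<bar>)"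
    unfolding lin by (intro sum_mono) (rule abs_triangle_ineq4)
  also have "\<dots> = g y + g x" by (simp add: g_def sum.distrib)
  also have "\<dots> \<le> 2 * R2" using xy(1,2) by (simp add: S_def)
  finally have b2: "(\<Sum>i\<in>UNIV. \<bar>(\<Sum>j\<in>UNIV. Y$i$j * q$j) - p$i\<bar>) \<le> 2 * R2" .
  show ?thesis using nz qi pi b1 b2 by blast
qed

lemma int_sum_abs_lt1:
  fixes p :: "real^'m"
  assumes "\<forall>i. p$i \<in> \<int>" "(\<Sum>i\<in>UNIV. \<bar>p$i\<bar>) < 1"
  shows "p = 0"
proof -
  have "p$i = 0" for i
  proof -
    have "\<bar>p$i\<bar> \<le> (\<Sum>i\<in>UNIV. \<bar>p$i\<bar>)"
      by (rule member_le_sum) auto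
    then have "\<bar>p$i\<bar> < 1" using assms(2) by linarith
    moreover obtain z where "p$i = of_int z" using assms(1) by (meson Ints_cases)
    ultimately show ?thesis by auto
  qed
  then show ?thesis by (simp add: vec_eq_iff)
qed

theorem mainTheorem3:
  fixes c :: real
  assumes "c > fact CARD('m) * fact CARD('n) / (real CARD('m) ^ CARD('m) * real CARD('n) ^ CARD('n))"
  shows "(D_mult (\<lambda>x. c * psi1 x) :: (real^'n::finite^'m::finite) set) = UNIV"
proof -
  define M where "M = CARD('m)"
  define N where "N = CARD('n)"
  have M0: "M > 0" and N0: "N > 0" by (simp_all add: M_def N_def)
  define K0 where "K0 = fact M * fact N / (real M ^ M * real N ^ N)"
  have K0pos: "K0 > 0" using M0 N0 by (simp add: K0_def)
  have cK: "c > K0" using assms by (simp add: K0_def M_def N_def)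
  define \<rho> where "\<rho> = (K0 + c) / 2"
  have \<rho>1: "K0 < \<rho>" "\<rho> < c" "\<rho> > 0" using cK K0pos by (simp_all add: \<rho>_def)
  define gn where "gn = (1 + K0 / \<rho>) / 2"
  have gn1: "K0 / \<rho> < gn" "gn < 1" "gn > 0" using \<rho>1 K0pos by (simp_all add: gn_def field_simps)
  define \<gamma> where "\<gamma> = root N gn"
  have \<gamma>pow: "\<gamma> ^ N = gn" using N0 gn1 by (simp add: \<gamma>_def real_root_pow_pos2)
  have \<gamma>1: "\<gamma> < 1" "\<gamma> > 0" using N0 gn1 by (simp_all add: \<gamma>_def)
  define T0 where "T0 = 2 + \<rho> * real M ^ M + (1 / (1 - \<gamma>)) ^ N"
  have T0: "T0 > 1" using \<rho>1 \<gamma>1 by (simp add: T0_def add_pos_nonneg)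
  have main: "Y \<in> S_mult (\<lambda>x. c * psi1 x) T" if T: "T \<ge> T0" for T and Y :: "real^'n^'m"
  proof -
    have Tpos: "T > 0" using T T0 by linarith
    define s where "s = root N T"
    have spow: "s ^ N = T" using N0 Tpos by (simp add: s_def real_root_pow_pos2)
    have spos: "s > 0" using N0 Tpos by (simp add: s_def)
    have "(1 / (1 - \<gamma>)) ^ N < T" using T \<rho>1 unfolding T0_def
      by (smt (verit) zero_le_power mult_nonneg_nonneg of_nat_0_le_iff)
    then have "root N ((1 / (1 - \<gamma>)) ^ N) < s" unfolding s_def using N0
      by (simp add: real_root_less_iff)
    moreover have "root N ((1 / (1 - \<gamma>)) ^ N) = 1 / (1 - \<gamma>)" using \<gamma>1 N0 by (intro real_root_power_cancel) auto
    ultimately have s1: "1 / (1 - \<gamma>) < s" by simp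
    define b where "b = \<gamma> * s"
    have bpos: "b > 0" using \<gamma>1 spos by (simp add: b_def)
    have b1s: "1 + b < s" using s1 \<gamma>1 by (simp add: b_def field_simps)
    define a where "a = root M (\<rho> / T)"
    have apow: "a ^ M = \<rho> / T" using M0 Tpos \<rho>1 by (simp add: a_def real_root_pow_pos2)
    have apos: "a > 0" using M0 Tpos \<rho>1 by (simp add: a_def)
    have "(1 / (1 - \<gamma>)) ^ N \<ge> 0" using \<gamma>1 by simp
    then have "\<rho> * real M ^ M < T" using T unfolding T0_def by linarith
    then have "(\<rho> * real M ^ M) / T < 1" using Tpos by simp
    moreover have "(\<rho> * real M ^ M) / T = a ^ M * real M ^ M" using apow by simp
    ultimately have "a ^ M * real M ^ M < 1" by simp
    then have "a ^ M < (1 / real M) ^ M" using M0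
      by (simp add: field_simps power_divide)
    then have aM: "a < 1 / real M" by (rule power_less_imp_less_base) simp
    have volr: "real N ^ N * b ^ N * (real M ^ M * a ^ M) / (fact N * fact M) > 1"
    proof -
      have "b ^ N = gn * T" unfolding b_def by (simp add: power_mult_distrib \<gamma>pow spow)
      then have "real N ^ N * b ^ N * (real M ^ M * a ^ M) / (fact N * fact M) = gn * \<rho> / K0"
        using apow Tpos by (simp add: K0_def field_simps)
      also have "\<dots> > 1" using gn1 \<rho>1 K0pos by (simp add: field_simps)
      finally show ?thesis .
    qed
    obtain q p where qp: "(q, p) \<noteq> 0" "\<forall>j. q$j \<in> \<int>" "\<forall>i. p$i \<in> \<int>"
       "(\<Sum>j\<in>UNIV. \<bar>q$j\<bar>) \<le> 2*(real N * b / 2)"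
       "(\<Sum>i\<in>UNIV. \<bar>(\<Sum>j\<in>UNIV. Y$i$j * q$j) - p$i\<bar>) \<le> 2*(real M * a / 2)"
    proof -
      have "(2*(real N * b / 2))^CARD('n)/fact CARD('n) * ((2*(real M * a / 2))^CARD('m)/fact CARD('m)) > 1"
        using volr by (simp add: M_def N_def power_mult_distrib field_simps)
      from mink_app[OF _ _ this, of Y] bpos apos show ?thesis using that by auto
    qed
    have qnz: "q \<noteq> 0"
    proof
      assume q0: "q = 0"
      have "(\<Sum>i\<in>UNIV. \<bar>p$i\<bar>) \<le> real M * a" using qp(5) q0 by simp
      also have "\<dots> < 1" using aM M0 by (simp add: field_simps)
      finally have "p = 0" using qp(3) int_sum_abs_lt1 by blast
      with q0 qp(1) show False by (simp add: zero_prod_def)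
    qed
    define qz where "qz = (\<chi> j. \<lfloor>q$j\<rfloor>)"
    define pz where "pz = (\<chi> i. \<lfloor>p$i\<rfloor>)"
    have qq: "of_int (qz$j) = q$j" for j using qp(2) unfolding qz_def
      by (auto elim!: Ints_cases)
    have pp: "of_int (pz$i) = p$i" for i using qp(3) unfolding pz_def
      by (auto elim!: Ints_cases)
    have qznz: "qz \<noteq> 0"
    proof
      assume "qz = 0"
      then have "q$j = 0" for j using qq[of j] by simp
      then show False using qnz by (simp add: vec_eq_iff)
    qed
    have prod_bound: "(\<Prod>i\<in>UNIV. \<bar>(\<Sum>j\<in>UNIV. Y $ i $ j * of_int (qz $ j)) - of_int (pz $ i)\<bar>) < c * psi1 T"
    proof -
      have "(\<Prod>i\<in>UNIV. \<bar>(\<Sum>j\<in>UNIV. Y $ i $ j * of_int (qz $ j)) - of_int (pz $ i)\<bar>)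
          = (\<Prod>i\<in>UNIV. \<bar>(\<Sum>j\<in>UNIV. Y$i$j * q$j) - p$i\<bar>)" by (simp add: qq pp)
      also have "\<dots> \<le> ((\<Sum>i\<in>UNIV. \<bar>(\<Sum>j\<in>UNIV. Y$i$j * q$j) - p$i\<bar>) / card (UNIV::'m set)) ^ card (UNIV::'m set)"
        by (rule amgm_pow) auto
      also have "\<dots> = ((\<Sum>i\<in>UNIV. \<bar>(\<Sum>j\<in>UNIV. Y$i$j * q$j) - p$i\<bar>) / real M) ^ M"
        by (simp add: M_def)
      also have "\<dots> \<le> (real M * a / real M) ^ M"
        using qp(5) M0 by (intro power_mono divide_right_mono) (simp_all add: M_def sum_nonneg)
      also have "\<dots> = \<rho> / T" using M0 apow by simp
      also have "\<dots> < c / T" using \<rho>1 Tpos by (simp add: divide_strict_right_mono)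
      finally show ?thesis by (simp add: psi1_def)
    qed
    have pi_bound: "Pi_plus (\<chi> j. (of_int (qz $ j) :: real)) < T"
    proof -
      have "Pi_plus (\<chi> j. (of_int (qz $ j) :: real)) = (\<Prod>j\<in>UNIV. max 1 \<bar>q$j\<bar>)"
        by (simp add: Pi_plus_def qq)
      also have "\<dots> \<le> ((\<Sum>j\<in>UNIV. max 1 \<bar>q$j\<bar>) / card (UNIV::'n set)) ^ card (UNIV::'n set)"
        by (rule amgm_pow) auto
      also have "\<dots> = ((\<Sum>j\<in>UNIV. max 1 \<bar>q$j\<bar>) / real N) ^ N"
        by (simp add: N_def)
      also have "\<dots> \<le> ((real N + real N * b) / real N) ^ N"
      proof (intro power_mono divide_right_mono)
        have "(\<Sum>j\<in>UNIV. max 1 \<bar>q$j\<bar>) \<le> (\<Sum>j\<in>UNIV. 1 + \<bar>q$j\<bar>)"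
          by (intro sum_mono) simp
        also have "\<dots> = real N + (\<Sum>j\<in>UNIV. \<bar>q$j\<bar>)" by (simp add: sum.distrib N_def)
        also have "\<dots> \<le> real N + real N * b" using qp(4) by simp
        finally show "(\<Sum>j\<in>UNIV. max 1 \<bar>q$j\<bar>) \<le> real N + real N * b" .
      qed (simp_all add: N_def sum_nonneg)
      also have "\<dots> = (1 + b) ^ N"
      proof -
        have "(real N + real N * b) / real N = 1 + b" using N0 by (simp add: field_simps)
        then show ?thesis by simp
      qed
      also have "\<dots> < s ^ N" using b1s bpos N0 by (intro power_strict_mono) auto
      finally show ?thesis using spow by simp
    qed
    show ?thesis unfolding S_mult_def using qznz prod_bound pi_bound by blast
  qed
  show ?thesis
  proof (rule set_eqI, rule iffI)
    fix Y :: "real^'n^'m"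
    show "Y \<in> D_mult (\<lambda>x. c * psi1 x)"
      unfolding D_mult_def using T0 main by blast
  qed simp
qed

end
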